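(* Let $Z(t)=\sum_{k=1}^{N(t)}X_k$ be a compound Poisson process with rate $\lambda>0$ whose iid jumps have a light right tail, let $S_k=X_1+\dots+X_k$, let $\Gamma_1<\Gamma_2<\dots$ be the arrival times of $N$, $\Gamma_0=0$, and $\tau=\max\{k\ge0:\Gamma_k<1\}$. Fix $b>0$, let $m=\min\{k:P(S_k>b)>0\}$, and set $a_k=\max\{1-(m+1)\log k/k,0\}$ for $k\ge1$, $a_0=0$. Define $Q(u)=P(Z(1)>u+b\Gamma_\tau,\ \Gamma_\tau\le a_\tau)$. Then $$\lim_{u\to\infty}\frac{Q(u)}{P(Z(1)>u+b)}=0.$$
   Context: A random variable $X$ has a light right tail if either (i) $P(X>u)>0$ for all $u>0$ and $\lim_{u\to\infty}P(X_1>u)/P(X_1+X_2>u)=0$, where $X_1,X_2$ are independent copies of $X$; or (ii) there are constants $A>0,\alpha>0$ with $X\le A$ a.s. and $P(X>\alpha)>0$. *)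

theory Defs
  imports "HOL-Probability.Probability"
begin

text \<open>Condition (i): tail positive everywhere and P(X1>u)/P(X1+X2>u) tends to 0,
  where X1+X2 (independent copies) has distribution mu convolved with mu.\<close>
definition light_right_tail :: "real measure \<Rightarrow> bool" where
  "light_right_tail mu \<longleftrightarrow>
     ((\<forall>u>0. measure mu {u<..} > 0) \<and>
      ((\<lambda>u. measure mu {u<..} / measure (mu \<star> mu) {u<..}) \<longlongrightarrow> 0) at_top)
   \<or> (\<exists>A>0. \<exists>\<alpha>>0. (AE x in mu. x \<le> A) \<and> measure mu {\<alpha><..} > 0)"

definition arrival :: "(nat \<Rightarrow> 'a \<Rightarrow> real) \<Rightarrow> nat \<Rightarrow> 'a \<Rightarrow> real" where
  "arrival E k \<omega> = (\<Sum>i\<in>{1..k}. E i \<omega>)"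

definition counting :: "(nat \<Rightarrow> 'a \<Rightarrow> real) \<Rightarrow> real \<Rightarrow> 'a \<Rightarrow> nat" where
  "counting E t \<omega> = card {k. 1 \<le> k \<and> arrival E k \<omega> \<le> t}"

definition compound :: "(nat \<Rightarrow> 'a \<Rightarrow> real) \<Rightarrow> (nat \<Rightarrow> 'a \<Rightarrow> real) \<Rightarrow> real \<Rightarrow> 'a \<Rightarrow> real" where
  "compound X E t \<omega> = (\<Sum>k\<in>{1..counting E t \<omega>}. X k \<omega>)"

definition tau :: "(nat \<Rightarrow> 'a \<Rightarrow> real) \<Rightarrow> 'a \<Rightarrow> nat" where
  "tau E \<omega> = (GREATEST k. arrival E k \<omega> < 1)"

definition aseq :: "nat \<Rightarrow> nat \<Rightarrow> real" where
  "aseq m k = (if k = 0 then 0 else max (1 - (real m + 1) * ln (real k) / real k) 0)"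

end

theory Submission
  imports Defs
begin


lemma (in prob_space) indep_vars_reindex:
  assumes inj: "inj_on f J" and ind: "indep_vars M' Y (f ` J)"
  shows "indep_vars (\<lambda>j. M' (f j)) (\<lambda>j. Y (f j)) J"
proof -
  have rv: "\<And>i. i \<in> f ` J \<Longrightarrow> random_variable (M' i) (Y i)"
    and isd: "indep_sets (\<lambda>i. sigma_sets (space M) {Y i -` A \<inter> space M |A. A \<in> sets (M' i)}) (f ` J)"
    using ind unfolding indep_vars_def by auto
  show ?thesis unfolding indep_vars_def
  proof safe
    fix j assume "j \<in> J" then show "random_variable (M' (f j)) (Y (f j))" using rv by auto
  next
    show "indep_sets (\<lambda>i. sigma_sets (space M) {Y (f i) -` A \<inter> space M |A. A \<in> sets (M' (f i))}) J"
      unfolding indep_sets_def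
    proof (intro conjI ballI allI impI subsetI)
      fix i x assume "i \<in> J" and "x \<in> sigma_sets (space M) {Y (f i) -` A \<inter> space M |A. A \<in> sets (M' (f i))}"
      then show "x \<in> events" using isd unfolding indep_sets_def by auto
    next
      fix K A assume K: "K \<subseteq> J" "K \<noteq> {}" "finite K"
      assume A: "A \<in> (\<Pi> i\<in>K. sigma_sets (space M) {Y (f i) -` A \<inter> space M |A. A \<in> sets (M' (f i))})"
      define B where "B = (\<lambda>i. A (the_inv_into K f i))"
      have injK: "inj_on f K" using inj K by (auto intro: inj_on_subset)
      have Bf: "\<And>k. k \<in> K \<Longrightarrow> B (f k) = A k"
        unfolding B_def using injK by (simp add: the_inv_into_f_f)
      have "prob (\<Inter> (B ` (f ` K))) = (\<Prod>j\<in>f ` K. prob (B j))"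
      proof (rule indep_setsD[OF isd])
        show "f ` K \<subseteq> f ` J" using K by auto
        show "f ` K \<noteq> {}" "finite (f ` K)" using K by auto
        show "\<forall>i\<in>f ` K. B i \<in> sigma_sets (space M) {Y i -` A \<inter> space M |A. A \<in> sets (M' i)}"
          using A Bf by auto
      qed
      moreover have "\<Inter> (B ` (f ` K)) = \<Inter> (A ` K)" using Bf by (auto simp: image_image)
      moreover have "(\<Prod>j\<in>f ` K. prob (B j)) = (\<Prod>j\<in>K. prob (A j))"
        using injK Bf by (simp add: prod.reindex)
      ultimately show "prob (\<Inter> (A ` K)) = (\<Prod>j\<in>K. prob (A j))" by simp
    qed
  qed
qed

lemma fact_mult_le: "fact a * fact b \<le> (fact (a + b) :: real)"
proof (induction b)
  case 0 then show ?case by simp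
next
  case (Suc b)
  have "fact a * fact (Suc b) = (real b + 1) * (fact a * fact b)" by (simp add: algebra_simps)
  also have "\<dots> \<le> (real (a + b) + 1) * fact (a + b)"
    using Suc by (intro mult_mono) auto
  also have "\<dots> = fact (a + Suc b)" by (simp add: algebra_simps)
  finally show ?case .
qed

lemma exp_tail_bound:
  fixes x :: real assumes x: "x \<ge> 0"
  shows "1 - (\<Sum>i<n. x ^ i * exp (- x) / fact i) \<le> x ^ n / fact n"
proof -
  define f where "f i = x ^ i / fact i" for i
  have sf: "f sums exp x" proof -
    have "(\<lambda>n. inverse (fact n) * x ^ n) = f" by (auto simp: f_def fun_eq_iff divide_inverse)
    then show ?thesis using exp_converges[of x] by (simp add: real_scaleR_def)
  qed
  then have sm: "summable f" by (rule sums_summable)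
  have "exp x = (\<Sum>j. f (j + n)) + (\<Sum>i<n. f i)"
    using suminf_split_initial_segment[OF sm, of n] sums_unique[OF sf] by simp
  moreover have "(\<Sum>j. f (j + n)) \<le> (\<Sum>j. x ^ n / fact n * f j)"
  proof (rule suminf_le)
    fix j
    have "f (j + n) = x ^ n * x ^ j / fact (j + n)" by (simp add: f_def power_add)
    also have "\<dots> \<le> x ^ n * x ^ j / (fact n * fact j)"
      using fact_mult_le[of n j] x by (intro divide_left_mono) (auto simp: add.commute)
    also have "\<dots> = x ^ n / fact n * f j" by (simp add: f_def)
    finally show "f (j + n) \<le> x ^ n / fact n * f j" .
  next
    show "summable (\<lambda>j. f (j + n))" using sm by (subst summable_iff_shift)
    show "summable (\<lambda>j. x ^ n / fact n * f j)" using sm by (rule summable_mult)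
  qed
  moreover have "(\<Sum>j. x ^ n / fact n * f j) = x ^ n / fact n * exp x"
    using suminf_mult[OF sm, of "x ^ n / fact n"] sums_unique[OF sf] by simp
  ultimately have "exp x - (\<Sum>i<n. f i) \<le> x ^ n / fact n * exp x" by linarith
  then have "exp (-x) * (exp x - (\<Sum>i<n. f i)) \<le> exp (-x) * (x ^ n / fact n * exp x)"
    by (intro mult_left_mono) auto
  moreover have "exp (-x) * (exp x - (\<Sum>i<n. f i)) = 1 - (\<Sum>i<n. x ^ i * exp (- x) / fact i)"
    by (simp add: f_def algebra_simps sum_distrib_left exp_minus_inverse)
  moreover have "exp (-x) * (x ^ n / fact n * exp x) = x ^ n / fact n"
  proof -
    have e: "exp (-x) * exp x = 1" by (simp add: exp_minus_inverse mult.commute)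
    have "exp (-x) * (x ^ n / fact n * exp x) = (exp (-x) * exp x) * (x ^ n / fact n)" by (simp only: ac_simps)
    then show ?thesis using e by simp
  qed
  ultimately show ?thesis by linarith
qed

lemma conv_tail:
  fixes P Q :: "real measure"
  assumes [simp]: "finite_measure P" "finite_measure Q" "sets P = sets borel" "sets Q = sets borel"
  shows "emeasure (P \<star> Q) {u<..} = (\<integral>\<^sup>+x. ennreal (measure Q {u-x<..}) \<partial>P)"
proof -
  have sp: "space P = space borel" "space Q = space borel" by (simp_all add: sets_eq_imp_space_eq)
  have "emeasure (P \<star> Q) {u<..} = (\<integral>\<^sup>+x. emeasure Q {a. a + x \<in> {u<..}} \<partial>P)"
    by (rule convolution_emeasure) (auto simp: sp)
  also have "\<dots> = (\<integral>\<^sup>+x. ennreal (measure Q {u-x<..}) \<partial>P)"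
  proof (rule nn_integral_cong)
    fix x
    have "{a. a + x \<in> {u<..}} = {u-x<..}" by auto
    then show "emeasure Q {a. a + x \<in> {u<..}} = ennreal (measure Q {u-x<..})"
      by (simp add: finite_measure.emeasure_eq_measure)
  qed
  finally show ?thesis .
qed

lemma mono_tail_meas:
  fixes Q :: "real measure"
  assumes [simp]: "finite_measure Q" "sets Q = sets borel"
  shows "(\<lambda>x. measure Q {u-x<..}) \<in> borel_measurable borel"
proof (rule borel_measurable_mono)
  show "mono (\<lambda>x. measure Q {u-x<..})"
    by (auto simp: mono_def intro!: finite_measure.finite_measure_mono)
qed


lemma fact_plus_le: "(fact (k + m) :: real) \<le> fact k * (real k + real m) ^ m"
proof (induction m)
  case 0 then show ?case by simp
next
  case (Suc m)
  have "(fact (k + Suc m) :: real) = (real k + real m + 1) * fact (k + m)" by (simp add: algebra_simps)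
  also have "\<dots> \<le> (real k + real m + 1) * (fact k * (real k + real m) ^ m)"
    using Suc by (intro mult_left_mono) auto
  also have "\<dots> \<le> (real k + real m + 1) * (fact k * (real k + real (Suc m)) ^ m)"
    by (intro mult_left_mono mult_left_mono power_mono) auto
  also have "\<dots> = fact k * (real k + real (Suc m)) ^ Suc m" by (simp add: algebra_simps)
  finally show ?case .
qed

lemma aseq_bound:
  assumes k: "k \<ge> 2"
  shows "aseq m k ^ k * real k ^ (m + 1) \<le> 1" and "0 \<le> aseq m k" and "aseq m k \<le> 1"
proof -
  have k0: "real k > 0" using k by simp
  have lnk: "ln (real k) \<ge> 0" using k by simp
  define x where "x = (real m + 1) * ln (real k) / real k"
  have x0: "x \<ge> 0" using lnk k0 by (simp add: x_def)
  have a: "aseq m k = max (1 - x) 0" using k by (simp add: aseq_def x_def)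
  show a0: "0 \<le> aseq m k" unfolding a by simp
  show "aseq m k \<le> 1" unfolding a using x0 by simp
  have "aseq m k \<le> exp (- x)"
    unfolding a using exp_ge_add_one_self[of "-x"] by simp
  then have "aseq m k ^ k \<le> exp (- x) ^ k" using a0 by (intro power_mono)
  also have "\<dots> = exp (real k * (- x))" by (rule exp_of_nat_mult[symmetric])
  also have "real k * (- x) = - (real (m + 1) * ln (real k))" using k0 by (simp add: x_def)
  finally have "aseq m k ^ k \<le> exp (- (real (m + 1) * ln (real k)))" .
  moreover have "exp (real (m + 1) * ln (real k)) = real k ^ (m + 1)"
    using k0 by (subst exp_of_nat_mult) simp
  ultimately have "aseq m k ^ k * real k ^ (m + 1) \<le> exp (- (real (m + 1) * ln (real k))) * exp (real (m + 1) * ln (real k))"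
    by (metis mult_right_mono zero_le_power of_nat_0_le_iff)
  also have "\<dots> = 1" by (simp add: exp_minus_inverse mult.commute)
  finally show "aseq m k ^ k * real k ^ (m + 1) \<le> 1" .
qed

lemma tail_seq:
  fixes l \<kappa> :: real
  assumes l: "l > 0" and kp: "\<kappa> > 0"
  shows "eventually (\<lambda>k. (l * aseq m k) ^ k / fact k \<le> \<kappa> * (l ^ k / fact (k + m))) sequentially"
proof -
  define N where "N = max (max m 2) (nat (ceiling (2 ^ m / \<kappa>)))"
  show ?thesis unfolding eventually_sequentially
  proof (intro exI allI impI)
    fix k assume kN: "N \<le> k"
    have k2: "k \<ge> 2" and km: "k \<ge> m" using kN by (auto simp: N_def)
    have kk: "real k \<ge> 2 ^ m / \<kappa>" using kN unfolding N_def by linarith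
    have k0: "real k > 0" using k2 by simp
    let ?a = "aseq m k"
    have ab: "?a ^ k * real k ^ (m + 1) \<le> 1" "0 \<le> ?a" using aseq_bound[OF k2] by auto
    have "?a ^ k * fact (k + m) \<le> ?a ^ k * (fact k * (real k + real m) ^ m)"
      using fact_plus_le[of k m] ab by (intro mult_left_mono) auto
    also have "\<dots> \<le> ?a ^ k * (fact k * (2 * real k) ^ m)"
      using km ab by (intro mult_left_mono power_mono) auto
    also have "\<dots> = fact k * 2 ^ m * (?a ^ k * real k ^ (m + 1)) / real k"
      using k0 by (simp add: power_mult_distrib field_simps)
    also have "\<dots> \<le> fact k * 2 ^ m * 1 / real k"
      using ab k0 by (intro divide_right_mono mult_left_mono) auto
    also have "\<dots> \<le> fact k * \<kappa>"
    proof -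
      have "2 ^ m \<le> \<kappa> * real k" using kk kp by (simp add: field_simps)
      then show ?thesis using k0 by (simp add: field_simps)
    qed
    finally have main: "?a ^ k * fact (k + m) \<le> fact k * \<kappa>" .
    have "(l * ?a) ^ k / fact k = l ^ k * (?a ^ k * fact (k + m)) / (fact k * fact (k + m))"
      by (simp add: power_mult_distrib field_simps)
    also have "\<dots> \<le> l ^ k * (fact k * \<kappa>) / (fact k * fact (k + m))"
      using main l by (intro divide_right_mono mult_left_mono) auto
    also have "\<dots> = \<kappa> * (l ^ k / fact (k + m))" by (simp add: field_simps)
    finally show "(l * ?a) ^ k / fact k \<le> \<kappa> * (l ^ k / fact (k + m))" .
  qed
qed


locale L5 = prob_space M for M :: "'a measure" +
  fixes X E :: "nat \<Rightarrow> 'a \<Rightarrow> real" and l b :: real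
  assumes l_pos: "l > 0" and b_pos: "b > 0"
    and Xm[measurable]: "\<And>k. k \<ge> 1 \<Longrightarrow> X k \<in> borel_measurable M"
    and Em[measurable]: "\<And>k. k \<ge> 1 \<Longrightarrow> E k \<in> borel_measurable M"
    and indep: "indep_vars (\<lambda>_. borel) (case_sum X E) (Inl ` {1..} \<union> Inr ` {1..})"
    and Xd: "\<And>k. k \<ge> 1 \<Longrightarrow> distr M borel (X k) = distr M borel (X 1)"
    and Ed: "\<And>k. k \<ge> 1 \<Longrightarrow> distributed M lborel (E k) (exponential_density l)"
    and light: "light_right_tail (distr M borel (X 1))"
begin

abbreviation "II \<equiv> Inl ` {1::nat..} \<union> Inr ` {1::nat..}"

lemma block_indep:
  assumes AB: "A \<subseteq> II" "B \<subseteq> II" "A \<inter> B = {}"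
    and f: "f \<in> borel_measurable (PiM A (\<lambda>_. borel))"
    and g: "g \<in> borel_measurable (PiM B (\<lambda>_. borel))"
  shows "indep_var borel (\<lambda>\<omega>. f (\<lambda>i\<in>A. case_sum X E i \<omega>)) borel (\<lambda>\<omega>. g (\<lambda>i\<in>B. case_sum X E i \<omega>))"
  using indep_var_compose[OF indep_var_restrict[OF indep AB(3,1,2)] f g] unfolding o_def .

definition T :: "nat \<Rightarrow> nat \<Rightarrow> 'a \<Rightarrow> real" where
  "T k j \<omega> = (\<Sum>i\<in>{Suc k..k+j}. X i \<omega>)"

definition G :: "nat \<Rightarrow> 'a \<Rightarrow> real" where
  "G k \<omega> = (\<Sum>i\<in>{1..k}. E i \<omega>)"

lemma G_arrival: "arrival E k = G k" by (simp add: arrival_def G_def fun_eq_iff)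

lemma T_measurable[measurable]: "T k j \<in> borel_measurable M"
  unfolding T_def by (intro borel_measurable_sum) (auto intro: Xm)

lemma G_measurable[measurable]: "G k \<in> borel_measurable M"
  unfolding G_def by (intro borel_measurable_sum) (auto intro: Em)

lemma T_indep_X: "indep_var borel (T k j) borel (X (Suc (k+j)))"
proof -
  let ?A = "Inl ` {Suc k..k+j} :: (nat+nat) set" and ?B = "{Inl (Suc (k+j))} :: (nat+nat) set"
  have "indep_var borel (\<lambda>\<omega>. (\<lambda>h. \<Sum>i\<in>{Suc k..k+j}. h (Inl i)) (\<lambda>i\<in>?A. case_sum X E i \<omega>))
     borel (\<lambda>\<omega>. (\<lambda>h. h (Inl (Suc (k+j)))) (\<lambda>i\<in>?B. case_sum X E i \<omega>))"
    by (rule block_indep) (auto intro!: borel_measurable_sum measurable_component_singleton)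
  also have "(\<lambda>\<omega>. (\<lambda>h. \<Sum>i\<in>{Suc k..k+j}. h (Inl i)) (\<lambda>i\<in>?A. case_sum X E i \<omega>)) = T k j"
    by (auto simp: T_def fun_eq_iff)
  also have "(\<lambda>\<omega>. (\<lambda>h. h (Inl (Suc (k+j)))) (\<lambda>i\<in>?B. case_sum X E i \<omega>)) = X (Suc (k+j))"
    by (auto simp: fun_eq_iff)
  finally show ?thesis .
qed

lemma T_indep_T: "indep_var borel (T 0 k) borel (T k j)"
proof -
  let ?A = "Inl ` {Suc 0..k} :: (nat+nat) set" and ?B = "Inl ` {Suc k..k+j} :: (nat+nat) set"
  have "indep_var borel (\<lambda>\<omega>. (\<lambda>h. \<Sum>i\<in>{Suc 0..k}. h (Inl i)) (\<lambda>i\<in>?A. case_sum X E i \<omega>))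
     borel (\<lambda>\<omega>. (\<lambda>h. \<Sum>i\<in>{Suc k..k+j}. h (Inl i)) (\<lambda>i\<in>?B. case_sum X E i \<omega>))"
    by (rule block_indep) (auto intro!: borel_measurable_sum measurable_component_singleton)
  also have "(\<lambda>\<omega>. (\<lambda>h. \<Sum>i\<in>{Suc 0..k}. h (Inl i)) (\<lambda>i\<in>?A. case_sum X E i \<omega>)) = T 0 k"
    by (auto simp: T_def fun_eq_iff)
  also have "(\<lambda>\<omega>. (\<lambda>h. \<Sum>i\<in>{Suc k..k+j}. h (Inl i)) (\<lambda>i\<in>?B. case_sum X E i \<omega>)) = T k j"
    by (auto simp: T_def fun_eq_iff)
  finally show ?thesis .
qed

lemma T_indep_GG:
  fixes P :: "real \<Rightarrow> real \<Rightarrow> bool"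
  assumes [measurable]: "Measurable.pred (borel \<Otimes>\<^sub>M borel) (\<lambda>(x,y). P x y)"
  shows "indep_var borel (T 0 k) borel (\<lambda>\<omega>. if P (G j \<omega>) (G (Suc j) \<omega>) then 1 else 0::real)"
proof -
  let ?A = "Inl ` {Suc 0..k} :: (nat+nat) set" and ?B = "Inr ` {1..Suc j} :: (nat+nat) set"
  have m1: "(\<lambda>h. \<Sum>i\<in>{1..j}. h (Inr i) :: real) \<in> borel_measurable (PiM ?B (\<lambda>_. borel))"
    by (rule borel_measurable_sum, rule measurable_component_singleton) auto
  have m2: "(\<lambda>h. \<Sum>i\<in>{1..Suc j}. h (Inr i) :: real) \<in> borel_measurable (PiM ?B (\<lambda>_. borel))"
    by (auto intro!: borel_measurable_sum measurable_component_singleton)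
  have "indep_var borel (\<lambda>\<omega>. (\<lambda>h. \<Sum>i\<in>{Suc 0..k}. h (Inl i)) (\<lambda>i\<in>?A. case_sum X E i \<omega>))
     borel (\<lambda>\<omega>. (\<lambda>h. if P (\<Sum>i\<in>{1..j}. h (Inr i)) (\<Sum>i\<in>{1..Suc j}. h (Inr i)) then 1 else 0::real) (\<lambda>i\<in>?B. case_sum X E i \<omega>))"
  proof (rule block_indep)
    show "(\<lambda>h. \<Sum>i\<in>{Suc 0..k}. h (Inl i) :: real) \<in> borel_measurable (PiM ?A (\<lambda>_. borel))"
      by (rule borel_measurable_sum, rule measurable_component_singleton) auto
    have pr: "(\<lambda>h. (\<Sum>i\<in>{1..j}. h (Inr i) :: real, \<Sum>i\<in>{1..Suc j}. h (Inr i) :: real)) \<in> measurable (PiM ?B (\<lambda>_. borel)) (borel \<Otimes>\<^sub>M borel)"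
      by (intro measurable_Pair m1 m2)
    have pm: "(\<lambda>p. if P (fst p) (snd p) then 1 else 0::real) \<in> borel_measurable (borel \<Otimes>\<^sub>M borel)"
    proof -
      have "Measurable.pred (borel \<Otimes>\<^sub>M borel) (\<lambda>p. P (fst p) (snd p))"
        using assms by (simp add: split_beta)
      then show ?thesis by (intro measurable_If measurable_const) auto
    qed
    from measurable_compose[OF pr pm]
    show "(\<lambda>h. if P (\<Sum>i\<in>{1..j}. h (Inr i)) (\<Sum>i\<in>{1..Suc j}. h (Inr i)) then 1 else 0::real) \<in> borel_measurable (PiM ?B (\<lambda>_. borel))"
      by simp
  qed auto
  also have "(\<lambda>\<omega>. (\<lambda>h. \<Sum>i\<in>{Suc 0..k}. h (Inl i)) (\<lambda>i\<in>?A. case_sum X E i \<omega>)) = T 0 k"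
    by (auto simp: T_def fun_eq_iff)
  also have "(\<lambda>\<omega>. (\<lambda>h. if P (\<Sum>i\<in>{1..j}. h (Inr i)) (\<Sum>i\<in>{1..Suc j}. h (Inr i)) then 1 else 0::real) (\<lambda>i\<in>?B. case_sum X E i \<omega>))
     = (\<lambda>\<omega>. if P (G j \<omega>) (G (Suc j) \<omega>) then 1 else 0::real)"
    by (auto simp: G_def fun_eq_iff)
  finally show ?thesis .
qed

lemma E_indep: "indep_vars (\<lambda>_. borel) E {1..}"
proof -
  have "indep_vars (\<lambda>_. borel) (case_sum X E) (Inr ` {1..})"
    by (rule indep_vars_subset[OF indep]) auto
  from indep_vars_reindex[OF _ this] show ?thesis by (simp add: inj_on_def)
qed

lemma G_erlang: "k \<ge> 1 \<Longrightarrow> distributed M lborel (G k) (erlang_density (k - 1) l)"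
proof -
  assume k: "k \<ge> 1"
  have "distributed M lborel (\<lambda>x. \<Sum>i\<in>{1..k}. E i x) (erlang_density (card {1..k} - 1) l)"
    by (rule exponential_distributed_sum) (use k l_pos Ed in \<open>auto intro: indep_vars_subset[OF E_indep]\<close>)
  then show ?thesis by (simp add: G_def[abs_def])
qed

lemma prob_G_le: assumes a: "a \<ge> 0"
  shows "prob {\<omega>\<in>space M. G k \<omega> \<le> a} = 1 - (\<Sum>i<k. (l*a)^i * exp (-(l*a)) / fact i)"
proof (cases "k = 0")
  case True
  then show ?thesis using a by (simp add: G_def prob_space)
next
  case False
  then have "prob {\<omega>\<in>space M. G k \<omega> \<le> a} = erlang_CDF (k - 1) l a"
    using erlang_distributed_le[OF G_erlang l_pos a] by simp
  also have "\<dots> = 1 - (\<Sum>i<k. (l*a)^i * exp (-(l*a)) / fact i)"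
  proof -
    have "{..k-1} = {..<k}" using False by auto
    then show ?thesis using a by (simp add: erlang_CDF_def)
  qed
  finally show ?thesis .
qed

lemma prob_G_le_bound: assumes a: "a \<ge> 0"
  shows "prob {\<omega>\<in>space M. G k \<omega> \<le> a} \<le> (l*a)^k / fact k"
  unfolding prob_G_le[OF a] using a l_pos by (intro exp_tail_bound) simp

lemma distributed_null:
  fixes Y :: "'a \<Rightarrow> real"
  assumes D: "distributed M lborel Y f" and A: "A \<in> sets borel"
    and Z: "AE x in lborel. x \<in> A \<longrightarrow> f x = 0"
  shows "emeasure M {\<omega>\<in>space M. Y \<omega> \<in> A} = 0"
proof -
  have Ym: "Y \<in> measurable M lborel" using distributed_measurable[OF D] .
  have fm: "f \<in> borel_measurable lborel" using distributed_borel_measurable[OF D] .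
  have "emeasure M {\<omega>\<in>space M. Y \<omega> \<in> A} = emeasure (distr M lborel Y) A"
    using Ym A by (subst emeasure_distr) (auto intro!: arg_cong[where f="emeasure M"])
  also have "\<dots> = emeasure (density lborel f) A" by (simp add: distributed_distr_eq_density[OF D])
  also have "\<dots> = (\<integral>\<^sup>+x. f x * indicator A x \<partial>lborel)"
    using fm A by (subst emeasure_density) auto
  also have "\<dots> = (\<integral>\<^sup>+x. 0 \<partial>(lborel::real measure))"
    by (rule nn_integral_cong_AE, rule AE_mp[OF Z]) (auto split: split_indicator)
  finally show ?thesis by simp
qed

lemma E_nonneg_AE: "AE \<omega> in M. \<forall>i\<ge>1. E i \<omega> \<ge> 0"
proof -
  have "AE \<omega> in M. E i \<omega> \<ge> 0" if i: "i \<ge> 1" for i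
  proof -
    have "emeasure M {\<omega>\<in>space M. E i \<omega> \<in> {..<0}} = 0"
      using Ed[OF i] by (rule distributed_null) (auto simp: exponential_density_def)
    then show ?thesis
      by (subst AE_iff_measurable[OF _ refl]) (use i in \<open>auto simp: not_le\<close>)
  qed
  then show ?thesis by (subst AE_all_countable) auto
qed

lemma G_ne1_AE: "AE \<omega> in M. \<forall>k. G k \<omega> \<noteq> 1"
proof -
  have "AE \<omega> in M. G k \<omega> \<noteq> 1" for k
  proof (cases "k = 0")
    case True then show ?thesis by (simp add: G_def)
  next
    case False
    have "emeasure M {\<omega>\<in>space M. G k \<omega> \<in> {1}} = 0"
    proof (rule distributed_null)
      show "distributed M lborel (G k) (erlang_density (k - 1) l)" using G_erlang[of k] False by simp
      show "AE x in lborel. x \<in> {1} \<longrightarrow> ennreal (erlang_density (k - 1) l x) = 0"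
        by (rule AE_mp[OF AE_lborel_singleton[of 1]]) auto
    qed auto
    then show ?thesis
      by (subst AE_iff_measurable[OF _ refl]) auto
  qed
  then show ?thesis by (subst AE_all_countable) auto
qed

lemma G_Suc: "G (Suc j) \<omega> = G j \<omega> + E (Suc j) \<omega>"
  by (simp add: G_def)

lemma G_mono: assumes "\<forall>i\<ge>1. E i \<omega> \<ge> 0" "i \<le> j" shows "G i \<omega> \<le> G j \<omega>"
  unfolding G_def using assms by (intro sum_mono2) auto

lemma G_nonneg: assumes "\<forall>i\<ge>1. E i \<omega> \<ge> 0" shows "G i \<omega> \<ge> 0"
  unfolding G_def using assms by (intro sum_nonneg) auto

definition r :: "nat \<Rightarrow> real" where "r j = l^j * exp (-l) / fact j"

lemma r_pos: "r j > 0" using l_pos by (simp add: r_def)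

lemma prob_N: "prob {\<omega>\<in>space M. G j \<omega> \<le> 1 \<and> 1 < G (Suc j) \<omega>} = r j"
proof -
  let ?A = "{\<omega>\<in>space M. G j \<omega> \<le> 1}" and ?B = "{\<omega>\<in>space M. G (Suc j) \<omega> \<le> 1}"
  have eq: "{\<omega>\<in>space M. G j \<omega> \<le> 1 \<and> 1 < G (Suc j) \<omega>} = ?A - ?B" by auto
  have AB: "prob (?A \<inter> ?B) = prob ?B"
  proof (rule measure_eq_AE)
    show "AE x in M. (x \<in> ?A \<inter> ?B) = (x \<in> ?B)"
    proof (rule AE_mp[OF E_nonneg_AE], rule AE_I2, safe)
      fix x assume "\<forall>i\<ge>1. E i x \<ge> 0" "G (Suc j) x \<le> 1"
      then show "G j x \<le> 1" using G_mono[of x j "Suc j"] by simp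
    qed
  qed auto
  have "prob {\<omega>\<in>space M. G j \<omega> \<le> 1 \<and> 1 < G (Suc j) \<omega>} = prob ?A - prob ?B"
    unfolding eq by (subst finite_measure_Diff') (auto simp: AB)
  also have "\<dots> = r j" unfolding prob_G_le[of 1, simplified] by (simp add: r_def)
  finally show ?thesis .
qed

abbreviation "\<mu> \<equiv> distr M borel (X 1)"
definition \<nu> :: "nat \<Rightarrow> real measure" where "\<nu> j = distr M borel (T 0 j)"
definition f :: "nat \<Rightarrow> real \<Rightarrow> real" where "f j u = prob {\<omega>\<in>space M. T 0 j \<omega> > u}"

lemma T_Suc: "T k (Suc j) \<omega> = T k j \<omega> + X (Suc (k+j)) \<omega>"
  by (simp add: T_def)

lemma T_zero: "T k 0 \<omega> = 0" by (simp add: T_def)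

lemma T_add: "T 0 (k + j) \<omega> = T 0 k \<omega> + T k j \<omega>"
proof -
  have "{Suc 0..k+j} = {Suc 0..k} \<union> {Suc k..k+j}" by auto
  then show ?thesis unfolding T_def by (subst sum.union_disjoint[symmetric]) auto
qed

lemma T01: "T 0 (Suc 0) = X 1" by (simp add: T_def fun_eq_iff)

lemma distr_T_Suc: "distr M borel (T k (Suc j)) = (distr M borel (T k j) \<star> \<mu>)"
proof -
  have "distr M borel (T k (Suc j)) = distr M borel (\<lambda>\<omega>. T k j \<omega> + X (Suc (k+j)) \<omega>)"
    by (rule arg_cong[where f="distr M borel"]) (simp add: fun_eq_iff T_Suc)
  also have "\<dots> = (distr M borel (T k j) \<star> distr M borel (X (Suc (k+j))))"
    by (rule sum_indep_random_variable[OF T_indep_X]) auto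
  also have "distr M borel (X (Suc (k+j))) = \<mu>" by (rule Xd) simp
  finally show ?thesis .
qed

lemma distr_T: "distr M borel (T k j) = \<nu> j"
  unfolding \<nu>_def
proof (induction j)
  case 0
  show ?case by (simp add: T_def)
next
  case (Suc j)
  then show ?case by (simp add: distr_T_Suc)
qed

lemma \<nu>_prob[simp]: "prob_space (\<nu> j)" unfolding \<nu>_def by (rule prob_space_distr) simp
lemma \<nu>_finite[simp]: "finite_measure (\<nu> j)" using \<nu>_prob[of j] by (simp add: prob_space_def)
lemma \<nu>_sets[simp]: "sets (\<nu> j) = sets borel" by (simp add: \<nu>_def)
lemma \<nu>_space[simp]: "space (\<nu> j) = UNIV" by (simp add: \<nu>_def)
lemma \<mu>_prob[simp]: "prob_space \<mu>" by (rule prob_space_distr) simp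
lemma \<mu>_finite[simp]: "finite_measure \<mu>" using \<mu>_prob by (simp add: prob_space_def)
lemma \<mu>_finite'[simp]: "finite_measure (distr M borel (X (Suc 0)))" using \<mu>_finite[unfolded One_nat_def] .
lemma \<mu>_prob'[simp]: "prob_space (distr M borel (X (Suc 0)))" using \<mu>_prob[unfolded One_nat_def] .
lemma \<nu>1: "\<nu> (Suc 0) = \<mu>" by (simp add: \<nu>_def T01)
lemma \<nu>_Suc: "\<nu> (Suc j) = (\<nu> j \<star> \<mu>)" unfolding \<nu>_def by (rule distr_T_Suc)

lemma f_\<nu>: "f j u = measure (\<nu> j) {u<..}"
  unfolding f_def \<nu>_def by (subst measure_distr) (auto intro!: arg_cong[where f=prob])

lemma prob_T: "prob {\<omega>\<in>space M. T k j \<omega> > u} = f j u"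
proof -
  have "prob {\<omega>\<in>space M. T k j \<omega> > u} = measure (distr M borel (T k j)) {u<..}"
    by (subst measure_distr) (auto intro!: arg_cong[where f=prob])
  then show ?thesis by (simp add: distr_T f_\<nu>)
qed

lemma f_nonneg: "f j u \<ge> 0" by (simp add: f_def)
lemma f_le1: "f j u \<le> 1" by (simp add: f_def)
lemma f_mono: "u \<le> v \<Longrightarrow> f j v \<le> f j u"
  unfolding f_def by (intro finite_measure_mono) auto

lemma f_prod: "f k u * f j v \<le> f (k + j) (u + v)"
proof -
  have "f k u * f j v = prob {\<omega>\<in>space M. T 0 k \<omega> \<in> {u<..} \<and> T k j \<omega> \<in> {v<..}}"
    using prob_indep_random_variable[OF T_indep_T, of "{u<..}" "{v<..}" k j] prob_T[where k=k and j=j and u=v]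
    by (simp add: f_def)
  also have "\<dots> \<le> f (k + j) (u + v)"
    unfolding f_def by (intro finite_measure_mono) (auto simp: T_add)
  finally show ?thesis .
qed

lemma f_zero: "u \<ge> 0 \<Longrightarrow> f 0 u = 0" by (simp add: f_def T_def)

lemma \<nu>2: "\<nu> 2 = (\<mu> \<star> \<mu>)"
  using \<nu>_Suc[of 1] by (simp add: numeral_2_eq_2 \<nu>1)

lemma \<nu>_SS: "\<nu> (Suc (Suc k)) = (\<nu> k \<star> \<nu> 2)"
proof -
  have "(\<nu> k \<star> \<nu> 2) = (\<nu> k \<star> (\<mu> \<star> \<mu>))" by (simp add: \<nu>2)
  also have "\<dots> = ((\<nu> k \<star> \<mu>) \<star> \<mu>)" by (rule convolution_associative) auto
  finally show ?thesis by (simp add: \<nu>_Suc)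
qed

lemma emeasure_\<nu>: "emeasure (\<nu> j) {u<..} = ennreal (f j u)"
  by (simp add: f_\<nu> finite_measure.emeasure_eq_measure)

lemma key_ineq:
  assumes e: "e \<ge> 0" and t: "\<And>s. s \<ge> t \<Longrightarrow> f 1 s \<le> e * f 2 s"
  shows "f (Suc k) u \<le> f k (u - t) + e * f (Suc (Suc k)) u"
proof -
  have "ennreal (f (Suc k) u) = emeasure (\<nu> k \<star> \<mu>) {u<..}"
    by (simp add: emeasure_\<nu>[symmetric] \<nu>_Suc)
  also have "\<dots> = (\<integral>\<^sup>+x. ennreal (measure \<mu> {u-x<..}) \<partial>\<nu> k)"
    by (rule conv_tail) auto
  also have "\<dots> \<le> (\<integral>\<^sup>+x. indicator {u-t<..} x + ennreal e * ennreal (measure (\<nu> 2) {u-x<..}) \<partial>\<nu> k)"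
  proof (rule nn_integral_mono)
    fix x
    show "ennreal (measure \<mu> {u-x<..}) \<le> indicator {u-t<..} x + ennreal e * ennreal (measure (\<nu> 2) {u-x<..})"
    proof (cases "x > u - t")
      case True
      have "measure \<mu> {u-x<..} \<le> 1" by (rule prob_space.prob_le_1) simp
      then show ?thesis using True by (simp add: ennreal_le_1 add_increasing2)
    next
      case False
      then have "measure \<mu> {u-x<..} \<le> e * measure (\<nu> 2) {u-x<..}"
        using t[of "u - x"] by (simp add: f_\<nu> \<nu>1)
      then have "ennreal (measure \<mu> {u-x<..}) \<le> ennreal e * ennreal (measure (\<nu> 2) {u-x<..})"
        using e by (simp add: ennreal_mult[symmetric] ennreal_leI)
      then show ?thesis by (simp add: add_increasing)
    qed
  qed
  also have "\<dots> = (\<integral>\<^sup>+x. indicator {u-t<..} x \<partial>\<nu> k) + ennreal e * (\<integral>\<^sup>+x. ennreal (measure (\<nu> 2) {u-x<..}) \<partial>\<nu> k)"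
  proof -
    have m: "(\<lambda>x. ennreal (measure (\<nu> 2) {u-x<..})) \<in> borel_measurable (\<nu> k)"
    proof -
      have m0: "(\<lambda>x. measure (\<nu> 2) {u-x<..}) \<in> borel_measurable borel"
        by (rule mono_tail_meas) auto
      have "(\<lambda>x. ennreal (measure (\<nu> 2) {u-x<..})) \<in> borel_measurable borel"
        using measurable_compose[OF m0 measurable_ennreal] by (simp add: o_def)
      then show ?thesis by (subst measurable_cong_sets[OF \<nu>_sets refl])
    qed
    show ?thesis
      using m by (subst nn_integral_add) (auto simp: nn_integral_cmult measurable_cong_sets[OF \<nu>_sets refl])
  qed
  also have "\<dots> = ennreal (f k (u - t)) + ennreal e * emeasure (\<nu> k \<star> \<nu> 2) {u<..}"
    by (subst conv_tail) (auto simp: emeasure_\<nu>)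
  also have "\<dots> = ennreal (f k (u - t) + e * f (Suc (Suc k)) u)"
  proof -
    have "emeasure (\<nu> k \<star> \<nu> 2) {u<..} = ennreal (f (Suc (Suc k)) u)"
      by (simp only: \<nu>_SS[symmetric] emeasure_\<nu>)
    moreover have "ennreal (e * f (Suc (Suc k)) u) = ennreal e * ennreal (f (Suc (Suc k)) u)"
      by (rule ennreal_mult) (use e f_nonneg in auto)
    moreover have "ennreal (f k (u - t) + e * f (Suc (Suc k)) u) = ennreal (f k (u - t)) + ennreal (e * f (Suc (Suc k)) u)"
      by (rule ennreal_plus) (use e f_nonneg in auto)
    ultimately show ?thesis by simp
  qed
  finally have le: "ennreal (f (Suc k) u) \<le> ennreal (f k (u - t) + e * f (Suc (Suc k)) u)" .
  have "0 \<le> f k (u - t) + e * f (Suc (Suc k)) u" using e f_nonneg by (simp add: add_nonneg_nonneg)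
  from ennreal_le_iff[OF this] le show ?thesis by simp
qed

end



context L5 begin

lemma f2_pos:
  assumes pos: "\<forall>u>0. f 1 u > 0" and u: "u > 0"
  shows "f 2 u > 0"
proof -
  have "f 1 (u/2) * f 1 (u/2) \<le> f (1+1) (u/2 + u/2)" by (rule f_prod)
  moreover have "f 1 (u/2) * f 1 (u/2) > 0" using pos u by simp
  ultimately show ?thesis by (simp add: numeral_2_eq_2)
qed

lemma light_i:
  assumes pos: "\<forall>u>0. f 1 u > 0" and H: "((\<lambda>u. f 1 u / f 2 u) \<longlongrightarrow> 0) at_top"
    and k: "k \<ge> 1"
  shows "\<forall>e>0. eventually (\<lambda>u. f k u \<le> e * f (Suc k) u) at_top"
  using k
proof (induction k rule: nat_induct_at_least)
  case base
  show ?case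
  proof (intro allI impI)
    fix e :: real assume e: "e > 0"
    have "eventually (\<lambda>u. f 1 u / f 2 u < e) at_top"
      using order_tendstoD(2)[OF H e] .
    moreover have "eventually (\<lambda>u. u > (0::real)) at_top" by (rule eventually_gt_at_top)
    ultimately show "eventually (\<lambda>u. f 1 u \<le> e * f (Suc 1) u) at_top"
    proof eventually_elim
      case (elim u)
      have p: "f 2 u > 0" using f2_pos[OF pos elim(2)] .
      then show ?case using elim(1) by (simp add: numeral_2_eq_2 divide_less_eq)
    qed
  qed
next
  case (Suc k)
  show ?case
  proof (intro allI impI)
    fix e :: real assume e: "e > 0"
    have base: "eventually (\<lambda>u. f 1 u \<le> (e/2) * f 2 u) at_top"
    proof -
      have e2: "0 < e/2" using e by simp
      have "eventually (\<lambda>u. f 1 u / f 2 u < e/2) at_top"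
        using order_tendstoD(2)[OF H e2] .
      moreover have "eventually (\<lambda>u. u > (0::real)) at_top" by (rule eventually_gt_at_top)
      ultimately show ?thesis
      proof eventually_elim
        case (elim u)
        have p: "f 2 u > 0" using f2_pos[OF pos elim(2)] .
        then show ?case using elim(1) by (simp add: divide_less_eq)
      qed
    qed
    then obtain t0 where t0: "\<And>s. s \<ge> t0 \<Longrightarrow> f 1 s \<le> (e/2) * f 2 s"
      by (auto simp: eventually_at_top_linorder)
    define t where "t = max t0 1"
    have tt: "\<And>s. s \<ge> t \<Longrightarrow> f 1 s \<le> (e/2) * f 2 s" using t0 by (simp add: t_def)
    define c where "c = f 1 t"
    have c: "c > 0" using pos by (simp add: c_def t_def)
    have ki: "\<And>u. f (Suc k) u \<le> f k (u - t) + (e/2) * f (Suc (Suc k)) u"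
      by (rule key_ineq) (use e tt in auto)
    have ec: "e * c / 2 > 0" using e c by simp
    have "eventually (\<lambda>u. f k u \<le> (e * c / 2) * f (Suc k) u) at_top"
      using Suc.IH ec by blast
    then obtain U where U: "\<And>v. v \<ge> U \<Longrightarrow> f k v \<le> (e * c / 2) * f (Suc k) v"
      by (auto simp: eventually_at_top_linorder)
    show "eventually (\<lambda>u. f (Suc k) u \<le> e * f (Suc (Suc k)) u) at_top"
      unfolding eventually_at_top_linorder
    proof (intro exI allI impI)
      fix u assume u: "u \<ge> U + t"
      have "f 1 t * f (Suc k) (u - t) \<le> f (1 + Suc k) (t + (u - t))" by (rule f_prod)
      then have pr: "c * f (Suc k) (u - t) \<le> f (Suc (Suc k)) u" by (simp add: c_def)
      have "f k (u - t) \<le> (e * c / 2) * f (Suc k) (u - t)" using U u by simp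
      also have "\<dots> = (e/2) * (c * f (Suc k) (u - t))" by simp
      also have "\<dots> \<le> (e/2) * f (Suc (Suc k)) u" using pr e by (intro mult_left_mono) auto
      finally have "f k (u - t) \<le> (e/2) * f (Suc (Suc k)) u" .
      then show "f (Suc k) u \<le> e * f (Suc (Suc k)) u" using ki[of u] by simp
    qed
  qed
qed

lemma case_ii:
  assumes A: "AE x in \<mu>. x \<le> A" and u: "u \<ge> real j * A"
  shows "f j u = 0"
proof -
  have "AE \<omega> in M. X i \<omega> \<le> A" if i: "i \<ge> 1" for i
  proof -
    have "AE x in distr M borel (X i). x \<le> A" by (subst Xd[OF i]) (rule A)
    then show ?thesis using i by (subst (asm) AE_distr_iff) auto
  qed
  then have "AE \<omega> in M. \<forall>i\<ge>1. X i \<omega> \<le> A" by (subst AE_all_countable) auto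
  then have "AE \<omega> in M. \<not> (T 0 j \<omega> > u)"
  proof (rule AE_mp, intro AE_I2 impI)
    fix \<omega> assume h: "\<forall>i\<ge>1. X i \<omega> \<le> A"
    have "T 0 j \<omega> \<le> (\<Sum>i\<in>{Suc 0..j}. A)" unfolding T_def using h by (simp only: add_0) (rule sum_mono, auto)
    then show "\<not> (T 0 j \<omega> > u)" using u by simp
  qed
  then show ?thesis unfolding f_def by (rule prob_eq_0_AE)
qed

end


context L5 begin

lemma Em'[measurable]: "E (Suc i) \<in> borel_measurable M" by (rule Em) simp

lemma nn_iff: "(\<forall>i\<ge>1. E i \<omega> \<ge> 0) \<longleftrightarrow> (\<forall>i. E (Suc i) \<omega> \<ge> 0)"
  by (metis Suc_le_D Suc_le_mono le0 One_nat_def)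

lemma f_alt: "f k u = measure M {\<omega>\<in>space M. (\<Sum>i\<in>{1..k}. X i \<omega>) > u}"
  by (simp add: f_def T_def)

lemma f1_\<mu>: "f 1 u = measure \<mu> {u<..}"
  using f_\<nu>[of 1 u] \<nu>1 by simp

lemma f2_\<mu>: "f 2 u = measure (\<mu> \<star> \<mu>) {u<..}"
  using f_\<nu>[of 2 u] \<nu>2 by simp

lemma light_cases:
  "((\<forall>u>0. f 1 u > 0) \<and> ((\<lambda>u. f 1 u / f 2 u) \<longlongrightarrow> 0) at_top)
   \<or> (\<exists>A>0. \<exists>\<alpha>>0. (AE x in \<mu>. x \<le> A) \<and> f 1 \<alpha> > 0)"
  using light unfolding light_right_tail_def f1_\<mu> f2_\<mu> .

lemma f_pow: "k \<ge> 1 \<Longrightarrow> f 1 a ^ k \<le> f k (real k * a)"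
proof (induction k rule: nat_induct_at_least)
  case base then show ?case by simp
next
  case (Suc k)
  have "f 1 a ^ Suc k = f 1 a ^ k * f 1 a" by (simp add: mult.commute)
  also have "\<dots> \<le> f k (real k * a) * f 1 a"
    using Suc.IH f_nonneg by (intro mult_right_mono) auto
  also have "\<dots> \<le> f (k + 1) (real k * a + a)" by (rule f_prod)
  finally show ?case by (simp add: algebra_simps)
qed

lemma m_exists: "\<exists>k. f k b > 0"
  using light_cases
proof
  assume "(\<forall>u>0. f 1 u > 0) \<and> ((\<lambda>u. f 1 u / f 2 u) \<longlongrightarrow> 0) at_top"
  then show ?thesis using b_pos by blast
next
  assume "\<exists>A>0. \<exists>\<alpha>>0. (AE x in \<mu>. x \<le> A) \<and> f 1 \<alpha> > 0"
  then obtain \<alpha> where a: "\<alpha> > 0" "f 1 \<alpha> > 0" by blast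
  obtain n :: nat where n: "b / \<alpha> < real n" using reals_Archimedean2 by blast
  define k where "k = Suc n"
  have k1: "k \<ge> 1" by (simp add: k_def)
  have "b \<le> real k * \<alpha>" using n a by (simp add: k_def field_simps)
  then have "f k (real k * \<alpha>) \<le> f k b" by (rule f_mono)
  moreover have "f 1 \<alpha> ^ k \<le> f k (real k * \<alpha>)" by (rule f_pow[OF k1])
  moreover have "f 1 \<alpha> ^ k > 0" using a by simp
  ultimately show ?thesis by (intro exI[of _ k]) linarith
qed

lemma aseq_01: "0 \<le> aseq m k" "aseq m k \<le> 1"
proof -
  show "0 \<le> aseq m k" by (simp add: aseq_def)
  have "(real m + 1) * ln (real k) / real k \<ge> 0" if "k \<noteq> 0" using that by simp
  then show "aseq m k \<le> 1" by (auto simp: aseq_def)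
qed

definition w :: "nat \<Rightarrow> nat \<Rightarrow> real" where "w m k = (l * aseq m k) ^ k / fact k"

lemma w_nonneg: "0 \<le> w m k" using aseq_01[of m k] l_pos by (simp add: w_def)
lemma w_le: "w m k \<le> l ^ k / fact k"
  unfolding w_def using aseq_01[of m k] l_pos
  by (intro divide_right_mono power_mono) (auto simp: mult_left_le)

lemma summable_exp_l: "summable (\<lambda>k. l ^ k / fact k)"
  using summable_exp[of l] by (simp add: divide_inverse mult.commute)

lemma summable_wf: "summable (\<lambda>k. w m k * f k u)"
proof (rule summable_comparison_test[OF _ summable_exp_l], intro exI allI impI)
  fix k :: nat
  have "w m k * f k u \<le> w m k" using w_nonneg[of m k] f_le1[of k u] by (simp add: mult_left_le)
  moreover have "0 \<le> w m k * f k u" using w_nonneg[of m k] f_nonneg[of k u] by simp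
  ultimately show "norm (w m k * f k u) \<le> l ^ k / fact k" using w_le[of m k] by simp
qed

end


context L5 begin

lemma tau_prop:
  assumes nn: "\<forall>i\<ge>1. E i \<omega> \<ge> 0" and ex: "\<exists>k. G k \<omega> \<ge> 1" and ne: "\<forall>k. G k \<omega> \<noteq> 1"
  shows "G (tau E \<omega>) \<omega> < 1 \<and> 1 < G (Suc (tau E \<omega>)) \<omega>"
proof -
  obtain K where K: "G K \<omega> \<ge> 1" using ex by blast
  have bnd: "\<And>y. G y \<omega> < 1 \<Longrightarrow> y \<le> K"
  proof -
    fix y assume y: "G y \<omega> < 1"
    show "y \<le> K"
    proof (rule ccontr)
      assume "\<not> y \<le> K"
      then have "G K \<omega> \<le> G y \<omega>" using G_mono[OF nn, of K y] by simp
      then show False using K y by simp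
    qed
  qed
  have P0: "G 0 \<omega> < 1" by (simp add: G_def)
  have t: "tau E \<omega> = (GREATEST k. G k \<omega> < 1)" by (simp add: tau_def G_arrival)
  have "G (tau E \<omega>) \<omega> < 1" unfolding t by (rule GreatestI_nat[where P="\<lambda>k. G k \<omega> < 1", OF P0 bnd])
  moreover have "\<not> G (Suc (tau E \<omega>)) \<omega> < 1"
  proof
    assume "G (Suc (tau E \<omega>)) \<omega> < 1"
    from Greatest_le_nat[of "\<lambda>k. G k \<omega> < 1", OF this bnd] show False unfolding t by simp
  qed
  ultimately show ?thesis using ne by (metis linorder_neqE_linordered_idom)
qed

lemma count_eq:
  assumes nn: "\<forall>i\<ge>1. E i \<omega> \<ge> 0" and j: "G j \<omega> \<le> 1" "1 < G (Suc j) \<omega>"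
  shows "counting E 1 \<omega> = j"
proof -
  have "{k. 1 \<le> k \<and> arrival E k \<omega> \<le> 1} = {1..j}"
  proof (intro set_eqI iffI)
    fix k assume "k \<in> {k. 1 \<le> k \<and> arrival E k \<omega> \<le> 1}"
    then have k: "1 \<le> k" "G k \<omega> \<le> 1" by (auto simp: G_arrival)
    have "k \<le> j"
    proof (rule ccontr)
      assume "\<not> k \<le> j"
      then have "G (Suc j) \<omega> \<le> G k \<omega>" using G_mono[OF nn, of "Suc j" k] by simp
      then show False using k j by simp
    qed
    then show "k \<in> {1..j}" using k by simp
  next
    fix k assume "k \<in> {1..j}"
    then have "G k \<omega> \<le> G j \<omega>" using G_mono[OF nn, of k j] by simp
    then show "k \<in> {k. 1 \<le> k \<and> arrival E k \<omega> \<le> 1}" using j \<open>k \<in> {1..j}\<close> by (simp add: G_arrival)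
  qed
  then show ?thesis by (simp add: counting_def)
qed

lemma compound_eq: "counting E 1 \<omega> = j \<Longrightarrow> compound X E 1 \<omega> = T 0 j \<omega>"
  by (simp add: compound_def T_def)

lemma prob_T_G:
  fixes P :: "real \<Rightarrow> real \<Rightarrow> bool"
  assumes [measurable]: "Measurable.pred (borel \<Otimes>\<^sub>M borel) (\<lambda>(x,y). P x y)"
  shows "prob {\<omega>\<in>space M. T 0 k \<omega> > u \<and> P (G j \<omega>) (G (Suc j) \<omega>)}
       = f k u * prob {\<omega>\<in>space M. P (G j \<omega>) (G (Suc j) \<omega>)}"
proof -
  let ?Y = "\<lambda>\<omega>. if P (G j \<omega>) (G (Suc j) \<omega>) then 1 else 0::real"
  have "\<P>(x in M. T 0 k x \<in> {u<..} \<and> ?Y x \<in> {1}) = \<P>(x in M. T 0 k x \<in> {u<..}) * \<P>(x in M. ?Y x \<in> {1})"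
    by (rule prob_indep_random_variable[OF T_indep_GG[OF assms]]) auto
  moreover have "\<And>x. ((if P (G j x) (G (Suc j) x) then 1 else 0::real) = 1) = P (G j x) (G (Suc j) x)" by simp
  ultimately show ?thesis by (simp add: f_def)
qed

definition \<Omega>1 :: "'a set" where
  "\<Omega>1 = {\<omega>\<in>space M. (\<forall>i. E (Suc i) \<omega> \<ge> 0) \<and> (\<forall>k. G k \<omega> \<noteq> 1) \<and> (\<exists>k. G k \<omega> \<ge> 1)}"

lemma \<Omega>1_sets: "\<Omega>1 \<in> sets M" unfolding \<Omega>1_def by measurable

lemma G_unbounded_AE: "AE \<omega> in M. \<exists>k. G k \<omega> \<ge> 1"
proof -
  let ?N = "{\<omega>\<in>space M. \<not> (\<exists>k. G k \<omega> \<ge> 1)}"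
  have Ns: "?N \<in> sets M" by measurable
  have le: "prob ?N \<le> l ^ n / fact n" for n
  proof -
    have "prob ?N \<le> prob {\<omega>\<in>space M. G n \<omega> \<le> 1}" by (rule finite_measure_mono) (auto simp: not_le intro: less_imp_le)
    also have "\<dots> \<le> (l * 1) ^ n / fact n" by (rule prob_G_le_bound) simp
    finally show ?thesis by simp
  qed
  have lim: "(\<lambda>n. l ^ n / fact n) \<longlonglongrightarrow> 0" by (rule summable_LIMSEQ_zero[OF summable_exp_l])
  have "prob ?N \<le> 0" by (rule LIMSEQ_le_const[OF lim]) (use le in auto)
  then have "emeasure M ?N = 0" using Ns by (simp add: emeasure_eq_measure measure_nonneg antisym)
  then show ?thesis by (subst AE_iff_measurable[OF Ns refl])
qed

lemma \<Omega>1_AE: "AE \<omega> in M. \<omega> \<in> \<Omega>1"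
  using E_nonneg_AE G_ne1_AE G_unbounded_AE AE_space
  by eventually_elim (auto simp: \<Omega>1_def nn_iff)

lemma measure_le_sets: "A \<subseteq> B \<Longrightarrow> B \<in> sets M \<Longrightarrow> measure M A \<le> measure M B"
  by (cases "A \<in> sets M") (auto intro: finite_measure_mono simp: measure_notin_sets)

lemma Q_bound:
  "measure M {\<omega>\<in>space M. compound X E 1 \<omega> > u + b * arrival E (tau E \<omega>) \<omega> \<and>
              arrival E (tau E \<omega>) \<omega> \<le> aseq m (tau E \<omega>)} \<le> (\<Sum>k. w m k * f k u)"
proof -
  define C where "C k = {\<omega>\<in>space M. G k \<omega> \<le> aseq m k \<and> T 0 k \<omega> > u}" for k
  have Cs: "C k \<in> sets M" for k unfolding C_def by measurable
  have Cm: "measure M (C k) \<le> w m k * f k u" for k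
  proof (cases "k = 0")
    case True
    have "C k = {\<omega>\<in>space M. T 0 k \<omega> > u}" using True by (auto simp: C_def G_def aseq_def)
    then show ?thesis using True by (simp add: w_def f_def)
  next
    case False
    have pm: "Measurable.pred (borel \<Otimes>\<^sub>M borel) (\<lambda>(x::real, y::real). x \<le> aseq m k)" by measurable
    have "measure M (C k) = f k u * prob {\<omega>\<in>space M. G k \<omega> \<le> aseq m k}"
      using prob_T_G[OF pm, where k=k and u=u and j=k] by (simp add: C_def conj_commute)
    also have "\<dots> \<le> f k u * w m k"
      using prob_G_le_bound[of "aseq m k" k] aseq_01[of m k] f_nonneg[of k u]
      by (intro mult_left_mono) (auto simp: w_def)
    finally show ?thesis by (simp add: mult.commute)
  qed
  have sC: "summable (\<lambda>k. measure M (C k))"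
    by (rule summable_comparison_test[OF _ summable_wf[of m u]]) (use Cm in \<open>auto intro!: exI[of _ 0]\<close>)
  let ?N = "space M - \<Omega>1"
  have Ns: "?N \<in> sets M" using \<Omega>1_sets by auto
  have N0: "measure M ?N = 0"
    using \<Omega>1_AE Ns by (subst prob_eq_0) auto
  have sub: "{\<omega>\<in>space M. compound X E 1 \<omega> > u + b * arrival E (tau E \<omega>) \<omega> \<and>
              arrival E (tau E \<omega>) \<omega> \<le> aseq m (tau E \<omega>)} \<subseteq> ?N \<union> (\<Union>k. C k)"
  proof
    fix \<omega> assume w: "\<omega> \<in> {\<omega>\<in>space M. compound X E 1 \<omega> > u + b * arrival E (tau E \<omega>) \<omega> \<and>
              arrival E (tau E \<omega>) \<omega> \<le> aseq m (tau E \<omega>)}"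
    show "\<omega> \<in> ?N \<union> (\<Union>k. C k)"
    proof (cases "\<omega> \<in> \<Omega>1")
      case False then show ?thesis using w by auto
    next
      case True
      then have nn: "\<forall>i\<ge>1. E i \<omega> \<ge> 0" and ex: "\<exists>k. G k \<omega> \<ge> 1" and ne: "\<forall>k. G k \<omega> \<noteq> 1"
        by (auto simp: \<Omega>1_def nn_iff[symmetric])
      define j where "j = tau E \<omega>"
      have tp: "G j \<omega> < 1" "1 < G (Suc j) \<omega>" using tau_prop[OF nn ex ne] by (auto simp: j_def)
      have "counting E 1 \<omega> = j" by (rule count_eq[OF nn]) (use tp in auto)
      then have ce: "compound X E 1 \<omega> = T 0 j \<omega>" by (rule compound_eq)
      have g0: "G j \<omega> \<ge> 0" by (rule G_nonneg[OF nn])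
      have "T 0 j \<omega> > u + b * G j \<omega>" "G j \<omega> \<le> aseq m j"
        using w ce by (auto simp: j_def G_arrival)
      moreover have "b * G j \<omega> \<ge> 0" using g0 b_pos by simp
      ultimately have "\<omega> \<in> C j" using w by (auto simp: C_def)
      then show ?thesis by auto
    qed
  qed
  have "measure M {\<omega>\<in>space M. compound X E 1 \<omega> > u + b * arrival E (tau E \<omega>) \<omega> \<and>
              arrival E (tau E \<omega>) \<omega> \<le> aseq m (tau E \<omega>)} \<le> measure M (?N \<union> (\<Union>k. C k))"
    by (rule measure_le_sets[OF sub]) (use Ns Cs in auto)
  also have "\<dots> \<le> measure M ?N + measure M (\<Union>k. C k)"
    by (rule measure_Un_le) (use Ns Cs in auto)
  also have "\<dots> \<le> 0 + (\<Sum>k. measure M (C k))"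
    using N0 by (simp add: finite_measure_subadditive_countably[OF _ sC] Cs image_subset_iff)
  also have "\<dots> \<le> (\<Sum>k. w m k * f k u)"
    using suminf_le[OF Cm sC summable_wf] by simp
  finally show ?thesis .
qed

end


context L5 begin

lemma D_bound:
  assumes Ds: "{\<omega>\<in>space M. compound X E 1 \<omega> > v} \<in> sets M" and J: "finite J"
  shows "(\<Sum>j\<in>J. r j * f j v) \<le> measure M {\<omega>\<in>space M. compound X E 1 \<omega> > v}"
proof -
  define A where "A j = {\<omega>\<in>space M. (\<forall>i. E (Suc i) \<omega> \<ge> 0) \<and> G j \<omega> \<le> 1 \<and> 1 < G (Suc j) \<omega> \<and> T 0 j \<omega> > v}" for j
  have As: "A j \<in> sets M" for j unfolding A_def by measurable
  have Am: "measure M (A j) = r j * f j v" for j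
  proof -
    have "measure M (A j) = prob {\<omega>\<in>space M. T 0 j \<omega> > v \<and> (G j \<omega> \<le> 1 \<and> 1 < G (Suc j) \<omega>)}"
    proof (rule measure_eq_AE)
      show "AE x in M. (x \<in> A j) = (x \<in> {\<omega> \<in> space M. v < T 0 j \<omega> \<and> G j \<omega> \<le> 1 \<and> 1 < G (Suc j) \<omega>})"
        using E_nonneg_AE by eventually_elim (auto simp: A_def nn_iff[symmetric])
    qed (use As in auto)
    also have "\<dots> = f j v * prob {\<omega>\<in>space M. G j \<omega> \<le> 1 \<and> 1 < G (Suc j) \<omega>}"
    proof -
      have pm: "Measurable.pred (borel \<Otimes>\<^sub>M borel) (\<lambda>(x::real, y::real). x \<le> 1 \<and> 1 < y)" by measurable
      show ?thesis using prob_T_G[OF pm, where k=j and u=v and j=j] by simp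
    qed
    also have "\<dots> = r j * f j v" by (simp add: prob_N)
    finally show ?thesis .
  qed
  have disj: "disjoint_family_on A J"
  unfolding disjoint_family_on_def
  proof (intro ballI impI)
    fix i j assume "i \<in> J" "j \<in> J" "i \<noteq> j"
    show "A i \<inter> A j = {}"
    proof (rule ccontr)
      assume "A i \<inter> A j \<noteq> {}"
      then obtain \<omega> where wi: "\<omega> \<in> A i" and wj: "\<omega> \<in> A j" by blast
      have "\<forall>i. E (Suc i) \<omega> \<ge> 0" using wi by (simp add: A_def)
      then have nn: "\<forall>i\<ge>1. E i \<omega> \<ge> 0" using nn_iff by blast
      have "i < j \<or> j < i" using \<open>i \<noteq> j\<close> by arith
      then show False
      proof
        assume "i < j"
        then have "G (Suc i) \<omega> \<le> G j \<omega>" by (intro G_mono[OF nn]) simp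
        then show False using wi wj by (simp add: A_def)
      next
        assume "j < i"
        then have "G (Suc j) \<omega> \<le> G i \<omega>" by (intro G_mono[OF nn]) simp
        then show False using wi wj by (simp add: A_def)
      qed
    qed
  qed
  have sub: "(\<Union>j\<in>J. A j) \<subseteq> {\<omega>\<in>space M. compound X E 1 \<omega> > v}"
  proof
    fix \<omega> assume "\<omega> \<in> (\<Union>j\<in>J. A j)"
    then obtain j where w: "\<omega> \<in> A j" by blast
    have "\<forall>i. E (Suc i) \<omega> \<ge> 0" using w by (simp add: A_def)
    then have nn: "\<forall>i\<ge>1. E i \<omega> \<ge> 0" using nn_iff by blast
    have "counting E 1 \<omega> = j" by (rule count_eq[OF nn]) (use w in \<open>auto simp: A_def\<close>)
    then have "compound X E 1 \<omega> = T 0 j \<omega>" by (rule compound_eq)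
    then show "\<omega> \<in> {\<omega>\<in>space M. compound X E 1 \<omega> > v}" using w by (auto simp: A_def)
  qed
  have "(\<Sum>j\<in>J. r j * f j v) = measure M (\<Union>j\<in>J. A j)"
    using J disj As by (subst measure_finite_Union) (auto simp: Am)
  also have "\<dots> \<le> measure M {\<omega>\<in>space M. compound X E 1 \<omega> > v}"
    by (rule finite_measure_mono[OF sub Ds])
  finally show ?thesis .
qed

definition Dl :: "real \<Rightarrow> real" where "Dl u = (\<Sum>j. r j * f j (u + b))"

lemma summable_r: "summable r"
proof -
  have "summable (\<lambda>j. exp (-l) * (l ^ j / fact j))" by (rule summable_mult[OF summable_exp_l])
  then show ?thesis by (simp add: r_def[abs_def] mult.commute mult.left_commute)
qed

lemma summable_rf: "summable (\<lambda>j. r j * f j v)"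
proof (rule summable_comparison_test[OF _ summable_r], intro exI allI impI)
  fix j :: nat
  have "r j * f j v \<le> r j" using r_pos[of j] f_le1[of j v] by (simp add: mult_left_le)
  moreover have "0 \<le> r j * f j v" using r_pos[of j] f_nonneg[of j v] by simp
  ultimately show "norm (r j * f j v) \<le> r j" by simp
qed

lemma Dl_nonneg: "Dl u \<ge> 0"
  unfolding Dl_def by (rule suminf_nonneg[OF summable_rf]) (simp add: r_pos f_nonneg less_imp_le)

lemma Dl_term: "r j * f j (u + b) \<le> Dl u"
proof -
  have "sum (\<lambda>j. r j * f j (u + b)) {j} \<le> Dl u"
    unfolding Dl_def by (rule sum_le_suminf[OF summable_rf]) (auto simp: r_pos f_nonneg less_imp_le)
  then show ?thesis by simp
qed

lemma D_ge_Dl: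
  "measure M {\<omega>\<in>space M. compound X E 1 \<omega> > u + b} = 0 \<or> Dl u \<le> measure M {\<omega>\<in>space M. compound X E 1 \<omega> > u + b}"
proof (cases "{\<omega>\<in>space M. compound X E 1 \<omega> > u + b} \<in> sets M")
  case True
  have "Dl u \<le> measure M {\<omega>\<in>space M. compound X E 1 \<omega> > u + b}"
    unfolding Dl_def by (rule suminf_le_const[OF summable_rf]) (rule D_bound[OF True], simp)
  then show ?thesis ..
next
  case False then show ?thesis by (simp add: measure_notin_sets)
qed

lemma shifted_sum_le:
  fixes g :: "nat \<Rightarrow> real"
  assumes "summable g" "\<And>n. g n \<ge> 0"
  shows "(\<Sum>n. g (n + N)) \<le> suminf g"
proof -
  have "suminf g = (\<Sum>n. g (n + N)) + sum g {..<N}" by (rule suminf_split_initial_segment[OF assms(1)])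
  moreover have "sum g {..<N} \<ge> 0" using assms(2) by (simp add: sum_nonneg)
  ultimately show ?thesis by simp
qed

end


context L5 begin

lemma fin_part: "\<delta> > 0 \<Longrightarrow> eventually (\<lambda>u. f k u \<le> \<delta> * Dl u) at_top"
proof (cases "k = 0")
  case True
  assume d: "\<delta> > 0"
  show ?thesis using eventually_ge_at_top[of "0::real"]
    by eventually_elim (use True d Dl_nonneg in \<open>simp add: f_zero\<close>)
next
  case False
  assume d: "\<delta> > 0"
  then have k1: "k \<ge> 1" using False by simp
  show ?thesis using light_cases
  proof
    assume H: "(\<forall>u>0. f 1 u > 0) \<and> ((\<lambda>u. f 1 u / f 2 u) \<longlongrightarrow> 0) at_top"
    have fb: "f 1 b > 0" using H b_pos by blast
    define \<delta>' where "\<delta>' = \<delta> * r (Suc (Suc k)) * f 1 b"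
    have d': "\<delta>' > 0" using d fb r_pos by (simp add: \<delta>'_def)
    have "eventually (\<lambda>u. f k u \<le> \<delta>' * f (Suc k) u) at_top"
      using light_i[of k] H k1 d' by blast
    then show ?thesis
    proof eventually_elim
      case (elim u)
      have "f (Suc k) u * f 1 b \<le> f (Suc k + 1) (u + b)" by (rule f_prod)
      then have "r (Suc (Suc k)) * (f 1 b * f (Suc k) u) \<le> r (Suc (Suc k)) * f (Suc (Suc k)) (u + b)"
        using less_imp_le[OF r_pos[of "Suc (Suc k)"]] by (intro mult_left_mono) (simp_all add: mult.commute)
      also have "\<dots> \<le> Dl u" by (rule Dl_term)
      finally have "\<delta>' * f (Suc k) u \<le> \<delta> * Dl u"
        using d by (simp add: \<delta>'_def mult_left_mono mult.assoc mult.left_commute)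
      then show ?case using elim by linarith
    qed
  next
    assume "\<exists>A>0. \<exists>\<alpha>>0. (AE x in \<mu>. x \<le> A) \<and> f 1 \<alpha> > 0"
    then obtain A where A: "AE x in \<mu>. x \<le> A" by blast
    show ?thesis using eventually_ge_at_top[of "real k * A"]
      by eventually_elim (use case_ii[OF A] d Dl_nonneg in simp)
  qed
qed

end


context L5 begin

lemma claimA:
  assumes c: "f m b > 0" and e: "e > 0"
  shows "eventually (\<lambda>u. (\<Sum>k. w m k * f k u) \<le> e * Dl u) at_top"
proof -
  define c where "c = f m b"
  define \<kappa> where "\<kappa> = (e/2) * c * l ^ m * exp (-l)"
  have kp: "\<kappa> > 0" using e c l_pos by (simp add: \<kappa>_def c_def)
  obtain K where K: "\<And>k. k \<ge> K \<Longrightarrow> (l * aseq m k) ^ k / fact k \<le> \<kappa> * (l ^ k / fact (k + m))"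
    using tail_seq[OF l_pos kp, of m] unfolding eventually_sequentially by blast
  have wK: "w m k \<le> (e/2) * c * r (k + m)" if "k \<ge> K" for k
  proof -
    have "w m k \<le> \<kappa> * (l ^ k / fact (k + m))" using K[OF that] by (simp add: w_def)
    also have "\<dots> = (e/2) * c * r (k + m)" by (simp add: \<kappa>_def r_def power_add field_simps)
    finally show ?thesis .
  qed
  define \<delta> where "\<delta> = e / (2 * (real K + 1))"
  have dp: "\<delta> > 0" using e by (simp add: \<delta>_def)
  have ev1: "\<forall>k\<in>{..<K}. eventually (\<lambda>u. w m k * f k u \<le> \<delta> * Dl u) at_top"
  proof
    fix k
    have wp: "w m k + 1 > 0" using w_nonneg[of m k] by simp
    have "eventually (\<lambda>u. f k u \<le> (\<delta> / (w m k + 1)) * Dl u) at_top"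
      by (rule fin_part) (use dp wp in simp)
    then show "eventually (\<lambda>u. w m k * f k u \<le> \<delta> * Dl u) at_top"
    proof eventually_elim
      case (elim u)
      have "w m k * f k u \<le> w m k * ((\<delta> / (w m k + 1)) * Dl u)"
        using elim w_nonneg[of m k] by (intro mult_left_mono) auto
      also have "\<dots> = (w m k / (w m k + 1)) * (\<delta> * Dl u)" by simp
      also have "\<dots> \<le> 1 * (\<delta> * Dl u)"
        using wp dp Dl_nonneg[of u] by (intro mult_right_mono) auto
      finally show ?case by simp
    qed
  qed
  have ev: "eventually (\<lambda>u. \<forall>k\<in>{..<K}. w m k * f k u \<le> \<delta> * Dl u) at_top"
    using ev1 by (rule eventually_ball_finite[rotated]) simp
  then show ?thesis
  proof eventually_elim
    case (elim u)
    let ?g = "\<lambda>k. w m k * f k u"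
    let ?h = "\<lambda>j. r j * f j (u + b)"
    have split: "(\<Sum>k. ?g k) = (\<Sum>n. ?g (n + K)) + sum ?g {..<K}"
      by (rule suminf_split_initial_segment[OF summable_wf])
    have s1: "sum ?g {..<K} \<le> (e/2) * Dl u"
    proof -
      have "sum ?g {..<K} \<le> sum (\<lambda>k. \<delta> * Dl u) {..<K}" using elim by (intro sum_mono) auto
      also have "\<dots> = real K * \<delta> * Dl u" by simp
      also have "\<dots> \<le> (e/2) * Dl u"
      proof (rule mult_right_mono[OF _ Dl_nonneg])
        have "real K * \<delta> = (e/2) * (real K / (real K + 1))" by (simp add: \<delta>_def field_simps)
        also have "\<dots> \<le> (e/2) * 1" using e by (intro mult_left_mono) auto
        finally show "real K * \<delta> \<le> e/2" by simp
      qed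
      finally show ?thesis .
    qed
    have sh: "summable (\<lambda>n. ?h (n + (K + m)))" using summable_rf by (subst summable_iff_shift)
    have s2: "(\<Sum>n. ?g (n + K)) \<le> (\<Sum>n. (e/2) * ?h (n + (K + m)))"
    proof (rule suminf_le)
      fix n
      have "?g (n + K) \<le> (e/2) * c * r (n + K + m) * f (n + K) u"
        using wK[of "n + K"] f_nonneg[of "n + K" u] by (intro mult_right_mono) auto
      also have "\<dots> = (e/2) * r (n + K + m) * (f (n + K) u * f m b)" by (simp add: c_def)
      also have "\<dots> \<le> (e/2) * r (n + K + m) * f (n + K + m) (u + b)"
        using e r_pos[of "n + K + m"] f_prod[of "n + K" u m b] by (intro mult_left_mono) auto
      finally show "?g (n + K) \<le> (e/2) * ?h (n + (K + m))" by (simp add: add.assoc)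
    next
      show "summable (\<lambda>n. ?g (n + K))" using summable_wf by (subst summable_iff_shift)
      show "summable (\<lambda>n. (e/2) * ?h (n + (K + m)))" using sh by (rule summable_mult)
    qed
    also have "\<dots> = (e/2) * (\<Sum>n. ?h (n + (K + m)))" by (rule suminf_mult[OF sh])
    also have "\<dots> \<le> (e/2) * Dl u"
      unfolding Dl_def using e
      by (intro mult_left_mono shifted_sum_le summable_rf) (auto simp: r_pos f_nonneg less_imp_le)
    finally have "(\<Sum>n. ?g (n + K)) \<le> (e/2) * Dl u" .
    then show ?case using split s1 by simp
  qed
qed

lemma main:
  "((\<lambda>u. measure M {\<omega>\<in>space M.
              compound X E 1 \<omega> > u + b * arrival E (tau E \<omega>) \<omega> \<and>
              arrival E (tau E \<omega>) \<omega> \<le> aseq (LEAST k. measure M {\<omega>\<in>space M. (\<Sum>i\<in>{1..k}. X i \<omega>) > b} > 0) (tau E \<omega>)}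
     / measure M {\<omega>\<in>space M. compound X E 1 \<omega> > u + b}) \<longlongrightarrow> 0) at_top"
proof -
  define m where "m = (LEAST k. measure M {\<omega>\<in>space M. (\<Sum>i\<in>{1..k}. X i \<omega>) > b} > 0)"
  have mf: "m = (LEAST k. f k b > 0)" unfolding m_def f_alt ..
  have c: "f m b > 0" unfolding mf by (rule LeastI_ex[OF m_exists])
  define Qf where "Qf u = measure M {\<omega>\<in>space M.
              compound X E 1 \<omega> > u + b * arrival E (tau E \<omega>) \<omega> \<and>
              arrival E (tau E \<omega>) \<omega> \<le> aseq m (tau E \<omega>)}" for u
  define Df where "Df u = measure M {\<omega>\<in>space M. compound X E 1 \<omega> > u + b}" for u
  have "((\<lambda>u. Qf u / Df u) \<longlongrightarrow> 0) at_top"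
  proof (rule order_tendstoI)
    fix a :: real assume "a < 0"
    then show "eventually (\<lambda>u. a < Qf u / Df u) at_top"
      by (intro always_eventually allI) (simp add: Qf_def Df_def less_le_trans[OF _ divide_nonneg_nonneg])
  next
    fix a :: real assume a: "a > 0"
    have "eventually (\<lambda>u. (\<Sum>k. w m k * f k u) \<le> (a/2) * Dl u) at_top"
      by (rule claimA[OF c]) (use a in simp)
    then show "eventually (\<lambda>u. Qf u / Df u < a) at_top"
    proof eventually_elim
      case (elim u)
      have Q: "Qf u \<le> (a/2) * Dl u" using Q_bound[of u m] elim by (simp add: Qf_def)
      show ?case
      proof (cases "Df u = 0")
        case True then show ?thesis using a by simp
      next
        case False
        then have D: "Dl u \<le> Df u" using D_ge_Dl[of u] by (simp add: Df_def)
        have Dp: "Df u > 0" using False by (simp add: Df_def less_le)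
        have "(a/2) * Dl u \<le> (a/2) * Df u" by (rule mult_left_mono[OF D]) (use a in simp)
        then have "Qf u \<le> (a/2) * Df u" using Q by linarith
        then have "Qf u / Df u \<le> a/2" using Dp by (simp add: divide_le_eq)
        moreover have "a/2 < a" using a by simp
        ultimately show ?thesis by linarith
      qed
    qed
  qed
  then show ?thesis by (simp add: Qf_def Df_def m_def)
qed

end

theorem lemma5:
  fixes M :: "'a measure" and X E :: "nat \<Rightarrow> 'a \<Rightarrow> real" and l b :: real
  assumes "prob_space M"
    and "l > 0" and "b > 0"
    and "\<And>k. k \<ge> 1 \<Longrightarrow> X k \<in> borel_measurable M"
    and "\<And>k. k \<ge> 1 \<Longrightarrow> E k \<in> borel_measurable M"
    and "prob_space.indep_vars M (\<lambda>_. borel) (case_sum X E) (Inl ` {1..} \<union> Inr ` {1..})"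
    and "\<And>k. k \<ge> 1 \<Longrightarrow> distr M borel (X k) = distr M borel (X 1)"
    and "\<And>k. k \<ge> 1 \<Longrightarrow> distributed M lborel (E k) (exponential_density l)"
    and "light_right_tail (distr M borel (X 1))"
  defines "m \<equiv> (LEAST k. measure M {\<omega>\<in>space M. (\<Sum>i\<in>{1..k}. X i \<omega>) > b} > 0)"
  defines "Q \<equiv> (\<lambda>u. measure M {\<omega>\<in>space M.
              compound X E 1 \<omega> > u + b * arrival E (tau E \<omega>) \<omega> \<and>
              arrival E (tau E \<omega>) \<omega> \<le> aseq m (tau E \<omega>)})"
  shows "((\<lambda>u. Q u / measure M {\<omega>\<in>space M. compound X E 1 \<omega> > u + b}) \<longlongrightarrow> 0) at_top"
  proof -
  have L: "L5 M X E l b"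
    unfolding L5_def L5_axioms_def using assms(1-9) by (intro conjI) (assumption | blast)+
  interpret L5 M X E l b by (rule L)
  show ?thesis unfolding Q_def m_def by (rule main)
qed

end
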